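(* Let $R$ be a local ring and $s\in R$ a central element with $s\in J(R)$. Let $A\in M_2(R;s)$ be such that neither $A$ nor $I_2-A$ is a unit of $M_2(R;s)$. Then $A$ is similar to $\left[\begin{smallmatrix} u&1\\ v&w\end{smallmatrix}\right]$ or to $\left[\begin{smallmatrix} w&1\\ v&u\end{smallmatrix}\right]$ for some $u\in 1+J(R)$, $v\in U(R)$, $w\in J(R)$.
   Context: All rings are associative with identity. A ring $R$ is local if $R/J(R)$ is a division ring, where $J(R)$ is the Jacobson radical; $U(R)$ is the group of units. For a ring $R$ and a central element $s\in R$, $M_2(R;s)$ denotes the ring whose elements are the $2\times 2$ arrays $\left[\begin{smallmatrix} a&b\\ c&d\end{smallmatrix}\right]$ with $a,b,c,d\in R$, with componentwise addition and multiplication $\left[\begin{smallmatrix} a&b\\ c&d\end{smallmatrix}\right]\left[\begin{smallmatrix} a'&b'\\ c'&d'\end{smallmatrix}\right]=\left[\begin{smallmatrix} aa'+s^2bc'&ab'+bd'\\ ca'+dc'&s^2cb'+dd'\end{smallmatrix}\right]$, with identity $I_2$. Two elements $A,B\in M_2(R;s)$ are similar if $B=P^{-1}AP$ for some unit $P$ of $M_2(R;s)$. *)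

theory Defs
  imports Main
begin

definition left_ideal :: "'a::ring_1 set \<Rightarrow> bool" where
  "left_ideal L \<longleftrightarrow> 0 \<in> L \<and> (\<forall>x\<in>L. \<forall>y\<in>L. x + y \<in> L) \<and> (\<forall>r. \<forall>x\<in>L. r * x \<in> L)"

definition maximal_left_ideal :: "'a::ring_1 set \<Rightarrow> bool" where
  "maximal_left_ideal L \<longleftrightarrow> left_ideal L \<and> L \<noteq> UNIV \<and>
     (\<forall>L'. left_ideal L' \<and> L \<subseteq> L' \<longrightarrow> L' = L \<or> L' = UNIV)"

definition jacobson :: "'a::ring_1 set" where
  "jacobson = \<Inter> {L. maximal_left_ideal L}"

definition is_unit_r :: "'a::ring_1 \<Rightarrow> bool" where
  "is_unit_r x \<longleftrightarrow> (\<exists>y. x * y = 1 \<and> y * x = 1)"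

text \<open>R is local iff R/J(R) is a division ring: the quotient is nonzero and every
nonzero class is invertible (unfolded without forming the quotient).\<close>
definition local_ring :: "'a::ring_1 itself \<Rightarrow> bool" where
  "local_ring _ \<longleftrightarrow> (jacobson :: 'a set) \<noteq> UNIV \<and>
     (\<forall>x::'a. x \<notin> jacobson \<longrightarrow> (\<exists>y. x * y - 1 \<in> jacobson \<and> y * x - 1 \<in> jacobson))"

definition central :: "'a::ring_1 \<Rightarrow> bool" where
  "central s \<longleftrightarrow> (\<forall>x. s * x = x * s)"

text \<open>The ring M_2(R;s): Mat2 a b c d stands for the array [a b; c d].\<close>
datatype 'a mat2 = Mat2 'a 'a 'a 'a

fun mmul :: "'a::ring_1 \<Rightarrow> 'a mat2 \<Rightarrow> 'a mat2 \<Rightarrow> 'a mat2" where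
  "mmul s (Mat2 a b c d) (Mat2 a' b' c' d') =
     Mat2 (a*a' + s^2*b*c') (a*b' + b*d') (c*a' + d*c') (s^2*c*b' + d*d')"

definition mone :: "'a::ring_1 mat2" where
  "mone = Mat2 1 0 0 1"

fun msub :: "'a::ring_1 mat2 \<Rightarrow> 'a mat2 \<Rightarrow> 'a mat2" where
  "msub (Mat2 a b c d) (Mat2 a' b' c' d') = Mat2 (a-a') (b-b') (c-c') (d-d')"

definition is_unit_m :: "'a::ring_1 \<Rightarrow> 'a mat2 \<Rightarrow> bool" where
  "is_unit_m s P \<longleftrightarrow> (\<exists>Q. mmul s P Q = mone \<and> mmul s Q P = mone)"

definition similar_m :: "'a::ring_1 \<Rightarrow> 'a mat2 \<Rightarrow> 'a mat2 \<Rightarrow> bool" where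
  "similar_m s A B \<longleftrightarrow> (\<exists>P Q. mmul s P Q = mone \<and> mmul s Q P = mone \<and>
      B = mmul s (mmul s Q A) P)"

end

theory Submission
  imports Defs
begin

lemma left_ideal_jac: "left_ideal (jacobson :: 'a::ring_1 set)"
  unfolding left_ideal_def jacobson_def maximal_left_ideal_def by auto

lemma jac_add: "x \<in> jacobson \<Longrightarrow> y \<in> jacobson \<Longrightarrow> x + y \<in> (jacobson :: 'a::ring_1 set)"
  using left_ideal_jac unfolding left_ideal_def by blast
lemma jac_lmul: "x \<in> jacobson \<Longrightarrow> r * x \<in> (jacobson :: 'a::ring_1 set)"
  using left_ideal_jac unfolding left_ideal_def by blast
lemma jac_0: "0 \<in> (jacobson :: 'a::ring_1 set)"
  using left_ideal_jac unfolding left_ideal_def by blast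
lemma jac_neg: "x \<in> jacobson \<Longrightarrow> - x \<in> (jacobson :: 'a::ring_1 set)"
  using jac_lmul[of x "-1"] by simp
lemma jac_diff: "x \<in> jacobson \<Longrightarrow> y \<in> jacobson \<Longrightarrow> x - y \<in> (jacobson :: 'a::ring_1 set)"
  using jac_add[of x "-y"] jac_neg[of y] by simp

lemma exists_max:
  fixes a :: "'a::ring_1"
  assumes "\<not> (\<exists>y. y * a = 1)"
  shows "\<exists>M. maximal_left_ideal M \<and> a \<in> M"
proof -
  define S where "S = {L. left_ideal L \<and> a \<in> L \<and> (1::'a) \<notin> L}"
  have "range (\<lambda>r. r * a) \<in> S"
    unfolding S_def left_ideal_def using assms
    apply (auto simp: distrib_right[symmetric] mult.assoc[symmetric])
     apply (rule image_eqI[of _ _ 0]; simp)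
    apply (rule image_eqI[of _ _ 1]; simp)
    done
  hence ne: "S \<noteq> {}" by blast
  have ch: "\<Union>C \<in> S" if "C \<noteq> {}" "subset.chain S C" for C
  proof -
    have CS: "C \<subseteq> S" and lin: "\<forall>X\<in>C. \<forall>Y\<in>C. X \<subseteq> Y \<or> Y \<subseteq> X"
      using that(2) by (auto simp: subset_chain_def)
    have "left_ideal (\<Union>C)"
      unfolding left_ideal_def
    proof (intro conjI ballI allI)
      show "0 \<in> \<Union>C" using that(1) CS unfolding S_def left_ideal_def by blast
    next
      fix x y assume "x \<in> \<Union>C" "y \<in> \<Union>C"
      then obtain X Y where XY: "X \<in> C" "Y \<in> C" "x \<in> X" "y \<in> Y" by blast
      from lin XY(1,2) have "X \<subseteq> Y \<or> Y \<subseteq> X" by blast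
      then show "x + y \<in> \<Union>C"
        using XY CS unfolding S_def left_ideal_def by blast
    next
      fix r x assume "x \<in> \<Union>C"
      then obtain X where "X \<in> C" "x \<in> X" by blast
      then show "r * x \<in> \<Union>C" using CS unfolding S_def left_ideal_def by blast
    qed
    moreover have "a \<in> \<Union>C" using that(1) CS unfolding S_def by blast
    moreover have "1 \<notin> \<Union>C" using CS unfolding S_def by blast
    ultimately show ?thesis unfolding S_def by blast
  qed
  obtain M where M: "M \<in> S" "\<forall>X\<in>S. M \<subseteq> X \<longrightarrow> X = M"
    using subset_Zorn_nonempty[OF ne ch] by blast
  have "maximal_left_ideal M"
    unfolding maximal_left_ideal_def
  proof (intro conjI allI impI)
    show "left_ideal M" using M unfolding S_def by blast
    show "M \<noteq> UNIV" using M unfolding S_def by blast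
    fix L' assume L': "left_ideal L' \<and> M \<subseteq> L'"
    show "L' = M \<or> L' = UNIV"
    proof (cases "1 \<in> L'")
      case True
      have "r \<in> L'" for r using L' True unfolding left_ideal_def
        by (metis mult.right_neutral)
      then show ?thesis by blast
    next
      case False
      then have "L' \<in> S" using L' M(1) unfolding S_def by blast
      then show ?thesis using M L' by blast
    qed
  qed
  then show ?thesis using M(1) unfolding S_def by blast
qed

lemma jac_sub_max: "maximal_left_ideal M \<Longrightarrow> jacobson \<subseteq> M"
  unfolding jacobson_def by blast

lemma one_plus_jac_left_inv:
  fixes j :: "'a::ring_1"
  assumes "j \<in> jacobson"
  shows "\<exists>y. y * (1 + j) = 1"
proof (rule ccontr)
  assume "\<not> ?thesis"
  then obtain M where M: "maximal_left_ideal M" "1 + j \<in> M" using exists_max by blast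
  have "j \<in> M" using jac_sub_max[OF M(1)] assms by blast
  have li: "left_ideal M" using M(1) unfolding maximal_left_ideal_def by blast
  have "(-1) * j \<in> M" using li \<open>j \<in> M\<close> unfolding left_ideal_def by blast
  hence "1 + j + (-1) * j \<in> M" using li M(2) unfolding left_ideal_def by blast
  hence "1 \<in> M" by simp
  hence "r \<in> M" for r using li unfolding left_ideal_def by (metis mult.right_neutral)
  thus False using M(1) unfolding maximal_left_ideal_def by blast
qed

lemma unit_of_inverses:
  fixes x :: "'a::ring_1"
  assumes "l * x = 1" "x * r = 1" shows "is_unit_r x"
proof -
  have "l = r" by (metis assms mult.assoc mult.left_neutral mult.right_neutral)
  thus ?thesis using assms unfolding is_unit_r_def by blast
qed

lemma one_plus_jac_unit:
  fixes j :: "'a::ring_1"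
  assumes "j \<in> jacobson"
  shows "is_unit_r (1 + j)"
proof -
  obtain y where y: "y * (1 + j) = 1" using one_plus_jac_left_inv[OF assms] by blast
  have "y = 1 + (-y) * j" using y by (simp add: algebra_simps)
  moreover have "(-y) * j \<in> jacobson" using jac_lmul[OF assms] by blast
  ultimately obtain z where z: "z * y = 1" using one_plus_jac_left_inv by metis
  have "z = 1 + j" by (metis y z mult.assoc mult.left_neutral mult.right_neutral)
  hence "(1 + j) * y = 1" using z by simp
  thus ?thesis using y unit_of_inverses by blast
qed

lemma unit_inv: "is_unit_r x \<Longrightarrow> \<exists>y. x * y = 1 \<and> y * x = 1 \<and> is_unit_r y"
  unfolding is_unit_r_def by blast

lemma unit_mult: "is_unit_r x \<Longrightarrow> is_unit_r y \<Longrightarrow> is_unit_r (x * (y::'a::ring_1))"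
  unfolding is_unit_r_def
proof (elim exE conjE)
  fix a b assume h: "x * a = 1" "a * x = 1" "y * b = 1" "b * y = 1"
  show "\<exists>z. x * y * z = 1 \<and> z * (x * y) = 1"
    by (rule exI[of _ "b * a"]) (metis h mult.assoc mult.left_neutral)
qed

lemma jac_ne: "local_ring TYPE('a::ring_1) \<Longrightarrow> (1::'a) \<notin> jacobson"
proof
  assume "local_ring TYPE('a)" "(1::'a) \<in> jacobson"
  hence "r \<in> (jacobson::'a set)" for r using jac_lmul[of 1 r] by simp
  thus False using \<open>local_ring TYPE('a)\<close> unfolding local_ring_def by blast
qed

lemma nonjac_unit:
  fixes x :: "'a::ring_1"
  assumes "local_ring TYPE('a)" "x \<notin> jacobson"
  shows "is_unit_r x"
proof -
  obtain y where y: "x * y - 1 \<in> jacobson" "y * x - 1 \<in> jacobson"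
    using assms unfolding local_ring_def by blast
  obtain w where w: "x * y * w = 1" using one_plus_jac_unit[OF y(1)] unfolding is_unit_r_def by auto
  obtain w' where w': "w' * (y * x) = 1" using one_plus_jac_unit[OF y(2)] unfolding is_unit_r_def by auto
  show ?thesis using unit_of_inverses[of "w' * y" x "y * w"] w w' by (simp add: mult.assoc)
qed

lemma unit_nonjac:
  fixes x :: "'a::ring_1"
  assumes "local_ring TYPE('a)" "is_unit_r x"
  shows "x \<notin> jacobson"
proof
  assume "x \<in> jacobson"
  obtain y where "y * x = 1" using assms(2) unfolding is_unit_r_def by blast
  hence "1 \<in> (jacobson :: 'a set)" using jac_lmul[OF \<open>x \<in> jacobson\<close>, of y] by simp
  thus False using jac_ne[OF assms(1)] by blast
qed

lemma jac_rmul: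
  fixes x :: "'a::ring_1"
  assumes L: "local_ring TYPE('a)" and x: "x \<in> jacobson"
  shows "x * r \<in> jacobson"
proof (rule ccontr)
  assume "x * r \<notin> jacobson"
  then obtain w where "x * r * w = 1" using nonjac_unit[OF L] unfolding is_unit_r_def by blast
  then obtain z where z: "x * z = 1" by (metis mult.assoc)
  define e where "e = z * x"
  have ee: "e * e = e" unfolding e_def by (metis z mult.assoc mult.left_neutral)
  have ej: "e \<in> jacobson" unfolding e_def using jac_lmul[OF x] .
  have "1 - e \<notin> jacobson"
  proof
    assume "1 - e \<in> jacobson"
    hence "(1 - e) + e \<in> (jacobson :: 'a set)" using jac_add ej by blast
    thus False using jac_ne[OF L] by simp
  qed
  then obtain g where g: "g * (1 - e) = 1" using nonjac_unit[OF L] unfolding is_unit_r_def by blast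
  have "e = g * (1 - e) * e" using g by simp
  also have "\<dots> = 0" using ee by (simp add: mult.assoc algebra_simps)
  finally have "e = 0" .
  have "(1::'a) = x * z * x * z" using z by simp
  also have "\<dots> = x * e * z" unfolding e_def by (simp add: mult.assoc)
  also have "\<dots> = 0" using \<open>e = 0\<close> by simp
  finally have "(1::'a) = 0" .
  hence "(1::'a) \<in> jacobson" using jac_0 by simp
  thus False using jac_ne[OF L] by blast
qed

lemma unit_iff: "local_ring TYPE('a::ring_1) \<Longrightarrow> is_unit_r (x::'a) \<longleftrightarrow> x \<notin> jacobson"
  using nonjac_unit unit_nonjac by blast


lemma central_sq: "central s \<Longrightarrow> x * s^2 = s^2 * (x::'a::ring_1)"
  unfolding central_def by (metis mult.assoc power2_eq_square)

lemma central_sq2: "central s \<Longrightarrow> x * (s^2 * y) = s^2 * ((x::'a::ring_1) * y)"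
  using central_sq by (metis mult.assoc)

lemma mmul_assoc:
  assumes "central s"
  shows "mmul s (mmul s A B) C = mmul s A (mmul s B C)"
  using central_sq[OF assms] central_sq2[OF assms]
  by (cases A; cases B; cases C) (simp add: algebra_simps)

lemma mone_l: "mmul s mone A = A" by (cases A) (simp add: mone_def)
lemma mone_r: "mmul s A mone = A" by (cases A) (simp add: mone_def)


lemma sim_refl: "similar_m s A A"
  unfolding similar_m_def by (rule exI[of _ mone], rule exI[of _ mone]) (simp add: mone_l mone_r)

lemma unit_prod_gen:
  assumes c: "central s" and PQ: "mmul s P Q = mone" "mmul s Q P = mone"
    and PQ': "mmul s P' Q' = mone" "mmul s Q' P' = mone"
  shows "mmul s (mmul s P P') (mmul s Q' Q) = mone" "mmul s (mmul s Q' Q) (mmul s P P') = mone"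
proof -
  have "mmul s (mmul s P P') (mmul s Q' Q) = mmul s P (mmul s (mmul s P' Q') Q)"
    by (simp only: mmul_assoc[OF c])
  also have "\<dots> = mone" by (simp add: PQ' mone_l PQ)
  finally show "mmul s (mmul s P P') (mmul s Q' Q) = mone" .
  have "mmul s (mmul s Q' Q) (mmul s P P') = mmul s Q' (mmul s (mmul s Q P) P')"
    by (simp only: mmul_assoc[OF c])
  also have "\<dots> = mone" by (simp add: PQ' mone_l PQ)
  finally show "mmul s (mmul s Q' Q) (mmul s P P') = mone" .
qed

lemma sim_trans:
  assumes c: "central s" and "similar_m s A B" "similar_m s B C"
  shows "similar_m s A C"
proof -
  obtain P Q where PQ: "mmul s P Q = mone" "mmul s Q P = mone" "B = mmul s (mmul s Q A) P"
    using assms(2) unfolding similar_m_def by blast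
  obtain P' Q' where PQ': "mmul s P' Q' = mone" "mmul s Q' P' = mone" "C = mmul s (mmul s Q' B) P'"
    using assms(3) unfolding similar_m_def by blast
  have 3: "C = mmul s (mmul s (mmul s Q' Q) A) (mmul s P P')"
    by (simp only: PQ'(3) PQ(3) mmul_assoc[OF c])
  show ?thesis unfolding similar_m_def using unit_prod_gen[OF c PQ(1,2) PQ'(1,2)] 3 by blast
qed

lemma unit_m_mult:
  assumes c: "central s" and "is_unit_m s P" "is_unit_m s P'"
  shows "is_unit_m s (mmul s P P')"
proof -
  obtain Q where PQ: "mmul s P Q = mone" "mmul s Q P = mone"
    using assms(2) unfolding is_unit_m_def by blast
  obtain Q' where PQ': "mmul s P' Q' = mone" "mmul s Q' P' = mone"
    using assms(3) unfolding is_unit_m_def by blast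
  show ?thesis unfolding is_unit_m_def using unit_prod_gen[OF c PQ PQ'] by blast
qed

lemma s2_jac:
  assumes "central s" "s \<in> jacobson"
  shows "s^2 * x \<in> (jacobson :: 'a::ring_1 set)"
proof -
  have "s^2 * x = x * s^2" using central_sq[OF assms(1)] by simp
  also have "\<dots> = (x * s) * s" by (simp add: power2_eq_square mult.assoc)
  finally have "s^2 * x = (x * s) * s" .
  thus ?thesis using jac_lmul[OF assms(2), of "x * s"] by simp
qed


lemma stepL:
  fixes a :: "'a::ring_1"
  assumes L: "local_ring TYPE('a)" and c: "central s" and sJ: "s \<in> jacobson"
    and ad: "a - d \<notin> jacobson"
  shows "\<exists>a' c' d'. similar_m s (Mat2 a b cc d) (Mat2 a' b c' d') \<and> a' - a \<in> jacobson \<and>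
           d' - d \<in> jacobson \<and> c' \<notin> jacobson"
proof (cases "cc \<in> jacobson")
  case False then show ?thesis using sim_refl jac_0 by force
next
  case True
  have sim: "similar_m s (Mat2 a b cc d) (Mat2 (a + s^2*b) b (cc - a + d - s^2*b) (d - s^2*b))"
    unfolding similar_m_def
    apply (rule exI[of _ "Mat2 1 0 1 1"], rule exI[of _ "Mat2 1 0 (-1) 1"])
    by (simp add: mone_def algebra_simps)
  have nj: "cc - a + d - s^2*b \<notin> jacobson"
  proof
    assume h: "cc - a + d - s^2*b \<in> jacobson"
    have "(cc - a + d - s^2*b) - cc + s^2*b \<in> jacobson"
      using jac_add[OF jac_diff[OF h True] s2_jac[OF c sJ]] .
    hence "-((cc - a + d - s^2*b) - cc + s^2*b) \<in> jacobson" by (rule jac_neg)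
    thus False using ad by (simp add: algebra_simps)
  qed
  have "(a + s^2*b) - a \<in> jacobson" using s2_jac[OF c sJ] by simp
  moreover have "(d - s^2*b) - d \<in> jacobson" using jac_neg[OF s2_jac[OF c sJ]] by simp
  ultimately show ?thesis using sim nj by blast
qed

lemma stepU:
  fixes a :: "'a::ring_1"
  assumes L: "local_ring TYPE('a)" and c: "central s" and sJ: "s \<in> jacobson"
    and ad: "a - d \<notin> jacobson"
  shows "\<exists>a' b' d'. similar_m s (Mat2 a b cc d) (Mat2 a' b' cc d') \<and> a' - a \<in> jacobson \<and>
           d' - d \<in> jacobson \<and> b' \<notin> jacobson"
proof (cases "b \<in> jacobson")
  case False then show ?thesis using sim_refl jac_0 by force
next
  case True
  have sim: "similar_m s (Mat2 a b cc d) (Mat2 (a - s^2*cc) (a - s^2*cc + b - d) cc (s^2*cc + d))"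
    unfolding similar_m_def
    apply (rule exI[of _ "Mat2 1 1 0 1"], rule exI[of _ "Mat2 1 (-1) 0 1"])
    by (simp add: mone_def algebra_simps)
  have nj: "a - s^2*cc + b - d \<notin> jacobson"
  proof
    assume h: "a - s^2*cc + b - d \<in> jacobson"
    have "(a - s^2*cc + b - d) - b + s^2*cc \<in> jacobson"
      using jac_add[OF jac_diff[OF h True] s2_jac[OF c sJ]] .
    thus False using ad by (simp add: algebra_simps)
  qed
  have "(a - s^2*cc) - a \<in> jacobson" using jac_neg[OF s2_jac[OF c sJ]] by simp
  moreover have "(s^2*cc + d) - d \<in> jacobson" using s2_jac[OF c sJ] by simp
  ultimately show ?thesis using sim nj by blast
qed

lemma reduce:
  fixes a :: "'a::ring_1"
  assumes L: "local_ring TYPE('a)" and c: "central s" and sJ: "s \<in> jacobson"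
    and ad: "a - d \<notin> jacobson"
  shows "\<exists>a' b' c' d'. similar_m s (Mat2 a b cc d) (Mat2 a' b' c' d') \<and> a' - a \<in> jacobson \<and>
           d' - d \<in> jacobson \<and> b' \<notin> jacobson \<and> c' \<notin> jacobson"
proof -
  obtain a1 c1 d1 where 1: "similar_m s (Mat2 a b cc d) (Mat2 a1 b c1 d1)" "a1 - a \<in> jacobson"
    "d1 - d \<in> jacobson" "c1 \<notin> jacobson" using stepL[OF L c sJ ad] by blast
  have ad1: "a1 - d1 \<notin> jacobson"
  proof
    assume "a1 - d1 \<in> jacobson"
    hence "(a1 - d1) - (a1 - a) + (d1 - d) \<in> jacobson" using 1 jac_add jac_diff by blast
    thus False using ad by (simp add: algebra_simps)
  qed
  obtain a2 b2 d2 where 2: "similar_m s (Mat2 a1 b c1 d1) (Mat2 a2 b2 c1 d2)" "a2 - a1 \<in> jacobson"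
    "d2 - d1 \<in> jacobson" "b2 \<notin> jacobson" using stepU[OF L c sJ ad1] by blast
  have "a2 - a = (a2 - a1) + (a1 - a)" "d2 - d = (d2 - d1) + (d1 - d)" by simp_all
  hence "a2 - a \<in> jacobson" "d2 - d \<in> jacobson" using 1 2 jac_add by metis+
  thus ?thesis using sim_trans[OF c 1(1) 2(1)] 1 2 by blast
qed

lemma diag_step:
  fixes a :: "'a::ring_1"
  assumes "b * bi = 1" "bi * b = 1"
  shows "similar_m s (Mat2 a b cc d) (Mat2 a 1 (b * cc) (b * d * bi))"
  unfolding similar_m_def
  apply (rule exI[of _ "Mat2 1 0 0 bi"], rule exI[of _ "Mat2 1 0 0 b"])
  using assms by (simp add: mone_def mult.assoc)

lemma unit_crit:
  fixes a :: "'a::ring_1"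
  assumes L: "local_ring TYPE('a)" and c: "central s" and sJ: "s \<in> jacobson"
    and a: "a \<notin> jacobson" and d: "d \<notin> jacobson"
  shows "is_unit_m s (Mat2 a b cc d)"
proof -
  obtain ai where ai: "a * ai = 1" "ai * a = 1" using nonjac_unit[OF L a] unfolding is_unit_r_def by blast
  define \<delta> where "\<delta> = d - s^2 * (cc * ai * b)"
  have "\<delta> \<notin> jacobson"
  proof
    assume "\<delta> \<in> jacobson"
    hence "\<delta> + s^2 * (cc * ai * b) \<in> jacobson" using jac_add s2_jac[OF c sJ] by blast
    thus False using d unfolding \<delta>_def by simp
  qed
  then obtain di where di: "\<delta> * di = 1" "di * \<delta> = 1" using nonjac_unit[OF L] unfolding is_unit_r_def by blast
  have ai2: "a * (ai * x) = x" "ai * (a * x) = x" "x * ai * a = x" "x * (ai * a) = x" for x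
    using ai by (simp_all add: mult.assoc[symmetric]) (simp add: mult.assoc)
  have fac: "Mat2 a b cc d = mmul s (mmul s (Mat2 1 0 (cc*ai) 1) (Mat2 a 0 0 \<delta>)) (Mat2 1 (ai*b) 0 1)"
    unfolding \<delta>_def by (simp add: ai2 mult.assoc)
  have u1: "is_unit_m s (Mat2 1 0 (cc*ai) 1)" unfolding is_unit_m_def
    by (rule exI[of _ "Mat2 1 0 (-(cc*ai)) 1"]) (simp add: mone_def)
  have u2: "is_unit_m s (Mat2 a 0 0 \<delta>)" unfolding is_unit_m_def
    by (rule exI[of _ "Mat2 ai 0 0 di"]) (simp add: mone_def ai di)
  have u3: "is_unit_m s (Mat2 1 (ai*b) 0 1)" unfolding is_unit_m_def
    by (rule exI[of _ "Mat2 1 (-(ai*b)) 0 1"]) (simp add: mone_def)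
  show ?thesis unfolding fac using unit_m_mult[OF c unit_m_mult[OF c u1 u2] u3] .
qed


theorem lemma2p15:
  fixes s :: "'a::ring_1" and A :: "'a mat2"
  assumes "local_ring TYPE('a)"
    and "central s"
    and "s \<in> jacobson"
    and "\<not> is_unit_m s A"
    and "\<not> is_unit_m s (msub mone A)"
  shows "\<exists>u v w. u - 1 \<in> jacobson \<and> is_unit_r v \<and> w \<in> jacobson \<and>
           (similar_m s A (Mat2 u 1 v w) \<or> similar_m s A (Mat2 w 1 v u))"
proof -
  note L = assms(1) and c = assms(2) and sJ = assms(3)
  obtain a b cc d where A: "A = Mat2 a b cc d" by (cases A)
  have ad: "a \<in> jacobson \<or> d \<in> jacobson" using assms(4) unit_crit[OF L c sJ] A by blast
  have ad1: "1 - a \<in> jacobson \<or> 1 - d \<in> jacobson"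
    using assms(5) unit_crit[OF L c sJ, of "1 - a" "1 - d" "- b" "- cc"] A by (simp add: mone_def) blast
  have one: "(1::'a) \<notin> jacobson" using jac_ne[OF L] .
  have nb: "x \<in> jacobson \<Longrightarrow> 1 - x \<in> jacobson \<Longrightarrow> False" for x :: 'a
    using jac_add[of x "1 - x"] one by simp
  have m1: "x - 1 \<in> jacobson" if "1 - x \<in> jacobson" for x :: 'a
    using jac_neg[OF that] by simp
  have amd: "a - d \<notin> jacobson"
  proof
    assume h: "a - d \<in> jacobson"
    consider "a \<in> jacobson" "1 - d \<in> jacobson" | "d \<in> jacobson" "1 - a \<in> jacobson"
      using ad ad1 nb by blast
    then show False
    proof cases
      case 1
      have "a - (a - d) \<in> jacobson" using jac_diff[OF 1(1) h] .
      thus False using nb 1(2) by simp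
    next
      case 2
      have "(a - d) + d \<in> jacobson" using jac_add[OF h 2(1)] .
      thus False using nb 2(2) by simp
    qed
  qed
  obtain a' b' c' d' where R: "similar_m s A (Mat2 a' b' c' d')" "a' - a \<in> jacobson"
    "d' - d \<in> jacobson" "b' \<notin> jacobson" "c' \<notin> jacobson"
    using reduce[OF L c sJ amd] A by blast
  obtain bi where bi: "b' * bi = 1" "bi * b' = 1" using nonjac_unit[OF L R(4)] unfolding is_unit_r_def by blast
  have S: "similar_m s A (Mat2 a' 1 (b' * c') (b' * d' * bi))"
    using sim_trans[OF c R(1) diag_step[OF bi]] .
  have v: "is_unit_r (b' * c')" using unit_mult nonjac_unit[OF L] R(4,5) by blast
  have conj: "b' * x * bi \<in> jacobson" if "x \<in> jacobson" for x
    using jac_rmul[OF L jac_lmul[OF that]] by blast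
  consider "a \<in> jacobson" "1 - d \<in> jacobson" | "d \<in> jacobson" "1 - a \<in> jacobson"
    using ad ad1 nb by blast
  then show ?thesis
  proof cases
    case 1
    have w: "a' \<in> jacobson" using jac_add[OF R(2) 1(1)] by simp
    have "d' - 1 \<in> jacobson" using jac_add[OF R(3) m1[OF 1(2)]] by simp
    hence "b' * (d' - 1) * bi \<in> jacobson" by (rule conj)
    hence u: "b' * d' * bi - 1 \<in> jacobson" using bi by (simp add: algebra_simps)
    show ?thesis using S w u v by blast
  next
    case 2
    have w: "d' \<in> jacobson" using jac_add[OF R(3) 2(1)] by simp
    have u: "a' - 1 \<in> jacobson" using jac_add[OF R(2) m1[OF 2(2)]] by simp
    show ?thesis using S u v conj[OF w] by blast
  qed
qed

end
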